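(* Let $\eta$ be Lorentzian, $e\in\Omega^1_{nd}(\partial M,\mathcal V^\partial)$, and assume $g^\partial=e^*\eta$ is nondegenerate. Then $$0\longrightarrow\ker(\mathsf W_e^{(1,2)})\xrightarrow{[\cdot,e]}\Omega^2(\partial M,\mathcal V^\partial)\xrightarrow{\mathsf W_e^{(2,1)}}\Omega^3(\partial M,\textstyle\bigwedge^2\mathcal V^\partial)\longrightarrow0$$ is a short exact sequence.
   Context: $\partial M$ is a 3-manifold, $\mathcal V^\partial$ a rank-4 bundle with fibre Minkowski metric $\eta$, $\bigwedge^2\mathcal V^\partial\cong\mathfrak{so}(3,1)$ acting on $\mathcal V^\partial$ ($[v,e]$ is this action combined with the wedge of forms). $\Omega^1_{nd}(\partial M,\mathcal V^\partial)$: 1-forms injective at each point. $\mathsf W_e^{(p,k)}:\Omega^p(\partial M,\bigwedge^k\mathcal V^\partial)\to\Omega^{p+1}(\partial M,\bigwedge^{k+1}\mathcal V^\partial)$, $X\mapsto X\wedge e$. *)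

theory Defs
  imports Complex_Main
begin

text \<open>Fibrewise (pointwise) model.  At a point x of the 3-manifold we fix a basis
  dx^0,dx^1,dx^2 of the cotangent space and an orthonormal frame v_0,...,v_3 of the
  fibre of V with eta = diag(-1,1,1,1).  An element of Omega^p(dM, wedge^k V) at x is
  represented by its coefficients w.r.t. the basis dx^P (x) v_K, indexed by
  P subset {0,1,2} with card P = p and K subset {0,..,3} with card K = k
  (increasingly ordered wedge products).\<close>

type_synonym coeffs = "nat set \<Rightarrow> nat set \<Rightarrow> real"

definition forms :: "nat \<Rightarrow> nat \<Rightarrow> coeffs set" where
  "forms p k = {f. \<forall>P K. f P K \<noteq> 0 \<longrightarrow>
      P \<subseteq> {..<3} \<and> card P = p \<and> K \<subseteq> {..<4} \<and> card K = k}"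

definition eta :: "nat \<Rightarrow> nat \<Rightarrow> real" where
  "eta i j = (if i = j then (if i = 0 then -1 else 1) else 0)"

text \<open>Sign of (basis of S in increasing order) wedge a = sign * basis of insert a S.\<close>
definition ins_sign :: "nat set \<Rightarrow> nat \<Rightarrow> real" where
  "ins_sign S a = (-1) ^ card {b \<in> S. a < b}"

text \<open>A V-valued 1-form e = sum_a sum_i e a i dx^a (x) v_i.\<close>
definition nondeg_form :: "(nat \<Rightarrow> nat \<Rightarrow> real) \<Rightarrow> bool" where
  "nondeg_form e \<longleftrightarrow> (\<forall>u :: nat \<Rightarrow> real.
      (\<forall>i<4. (\<Sum>a<3. u a * e a i) = 0) \<longrightarrow> (\<forall>a<3. u a = 0))"

definition pullback_metric :: "(nat \<Rightarrow> nat \<Rightarrow> real) \<Rightarrow> nat \<Rightarrow> nat \<Rightarrow> real" where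
  "pullback_metric e a b = (\<Sum>i<4. \<Sum>j<4. e a i * eta i j * e b j)"

definition nondegenerate3 :: "(nat \<Rightarrow> nat \<Rightarrow> real) \<Rightarrow> bool" where
  "nondegenerate3 g \<longleftrightarrow> (\<forall>u :: nat \<Rightarrow> real.
      (\<forall>b<3. (\<Sum>a<3. u a * g a b) = 0) \<longrightarrow> (\<forall>a<3. u a = 0))"

text \<open>W_e : X \<mapsto> X wedge e, with (alpha (x) A) wedge (beta (x) B) = (alpha wedge beta) (x) (A wedge B).\<close>
definition wedge_e :: "(nat \<Rightarrow> nat \<Rightarrow> real) \<Rightarrow> coeffs \<Rightarrow> coeffs" where
  "wedge_e e X Q L =
     (if Q \<subseteq> {..<3} \<and> L \<subseteq> {..<4} then
        (\<Sum>a\<in>Q. \<Sum>i\<in>L. X (Q - {a}) (L - {i}) * e a i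
                         * ins_sign (Q - {a}) a * ins_sign (L - {i}) i)
      else 0)"

definition W :: "(nat \<Rightarrow> nat \<Rightarrow> real) \<Rightarrow> nat \<Rightarrow> nat \<Rightarrow> coeffs \<Rightarrow> coeffs" where
  "W e p k X = wedge_e e X"

text \<open>Action of wedge^2 V = so(3,1) on V: (v_i wedge v_j) . w = v_i eta(v_j,w) - v_j eta(v_i,w).
  act J k m = coefficient of v_m in (v_i wedge v_j) . v_k, where J = {i,j}, i < j.\<close>
definition act :: "nat set \<Rightarrow> nat \<Rightarrow> nat \<Rightarrow> real" where
  "act J k m = (let i = Min J; j = Max J in
      eta j k * (if m = i then 1 else 0) - eta i k * (if m = j then 1 else 0))"

text \<open>[v,e] for v in Omega^1(wedge^2 V): sum_{a,b} (v_a . e_b) dx^a wedge dx^b.\<close>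
definition bracket :: "coeffs \<Rightarrow> (nat \<Rightarrow> nat \<Rightarrow> real) \<Rightarrow> coeffs" where
  "bracket v e Q M =
     (if Q \<subseteq> {..<3} \<and> card Q = 2 \<and> M \<subseteq> {..<4} \<and> card M = 1 then
        (\<Sum>a\<in>Q. \<Sum>b\<in>Q - {a}. \<Sum>J\<in>{J. J \<subseteq> {..<4} \<and> card J = 2}. \<Sum>k<4.
            v {a} J * e b k * (if a < b then 1 else -1) * act J k (the_elem M))
      else 0)"

end

theory Submission
  imports Defs "HOL-Analysis.Determinants"
begin

lemma ins_sign_empty[simp]: "ins_sign {} a = 1"
  by (simp add: ins_sign_def)
lemma ins_sign_insert[simp]: "b \<notin> S \<Longrightarrow> finite S \<Longrightarrow>
   ins_sign (insert b S) a = (if a < b then -1 else 1) * ins_sign S a"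
proof -
  assume h: "b \<notin> S" "finite S"
  have "{c \<in> insert b S. a < c} = (if a < b then insert b {c \<in> S. a < c} else {c \<in> S. a < c})" by auto
  then show ?thesis using h by (simp add: ins_sign_def)
qed

definition fw :: "(nat set \<Rightarrow> real) \<Rightarrow> (nat \<Rightarrow> real) \<Rightarrow> nat set \<Rightarrow> real" where
  "fw w x L = (\<Sum>i\<in>L. w (L - {i}) * x i * ins_sign (L - {i}) i)"
definition one0 :: "nat set \<Rightarrow> real" where "one0 L = (if L = {} then 1 else 0)"
definition w2 :: "(nat \<Rightarrow> real) \<Rightarrow> (nat \<Rightarrow> real) \<Rightarrow> nat set \<Rightarrow> real" where
  "w2 x y = fw (fw one0 x) y"
definition P2 :: "(nat set \<Rightarrow> real) \<Rightarrow> (nat \<Rightarrow> real) \<Rightarrow> (nat \<Rightarrow> real) \<Rightarrow> real" where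
  "P2 w x y = fw (fw w x) y {0,1,2,3}"
definition det4 :: "(nat \<Rightarrow> real) \<Rightarrow> (nat \<Rightarrow> real) \<Rightarrow> (nat \<Rightarrow> real) \<Rightarrow> (nat \<Rightarrow> real) \<Rightarrow> real" where
  "det4 x y z w = fw (fw (fw (fw one0 x) y) z) w {0,1,2,3}"

lemmas ev = fw_def one0_def w2_def P2_def det4_def insert_Diff_if

lemma cramer_vec:
  assumes "m < 4"
  shows "det4 x0 x1 x2 x3 * w m = det4 w x1 x2 x3 * x0 m + det4 x0 w x2 x3 * x1 m
     + det4 x0 x1 w x3 * x2 m + det4 x0 x1 x2 w * x3 m"
proof -
  have "m = 0 \<or> m = 1 \<or> m = 2 \<or> m = 3" using assms by auto
  then show ?thesis by (elim disjE) (simp_all add: ev algebra_simps)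
qed

lemma cramer_biv:
  assumes "J = {0,1} \<or> J = {0,2} \<or> J = {0,3} \<or> J = {1,2} \<or> J = {1,3} \<or> J = {2,3}"
  shows "det4 x0 x1 x2 f * om J =
     P2 om x0 f * w2 x1 x2 J + P2 om x1 f * w2 x2 x0 J + P2 om x2 f * w2 x0 x1 J
   + P2 om x1 x2 * w2 x0 f J + P2 om x2 x0 * w2 x1 f J + P2 om x0 x1 * w2 x2 f J"
  using assms by (elim disjE) (simp_all add: ev algebra_simps)

lemma lt4: "{..<4::nat} = {0,1,2,3}" by auto
lemma lt3: "{..<3::nat} = {0,1,2}" by auto
lemmas evW = W_def wedge_e_def lt3 lt4

lemma idA01: "P2 (\<lambda>J. v {0} J) (e 1) x - P2 (\<lambda>J. v {1} J) (e 0) x = fw (W e 1 2 v {0,1}) x {0,1,2,3}"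
  by (simp add: ev evW algebra_simps)
lemma idA02: "P2 (\<lambda>J. v {0} J) (e 2) x - P2 (\<lambda>J. v {2} J) (e 0) x = fw (W e 1 2 v {0,2}) x {0,1,2,3}"
  by (simp add: ev evW algebra_simps)
lemma idA12: "P2 (\<lambda>J. v {1} J) (e 2) x - P2 (\<lambda>J. v {2} J) (e 1) x = fw (W e 1 2 v {1,2}) x {0,1,2,3}"
  by (simp add: ev evW algebra_simps)
lemma P2_anti: "P2 w x y = - P2 w y x"
  by (simp add: ev algebra_simps)
lemma P2_same: "P2 w x x = 0"
  by (simp add: ev algebra_simps)

lemma J2_eq: "{J. J \<subseteq> {..<4::nat} \<and> card J = 2} = {{0,1},{0,2},{0,3},{1,2},{1,3},{2,3}}"
proof (rule set_eqI, rule iffI)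
  fix J assume "J \<in> {J. J \<subseteq> {..<4::nat} \<and> card J = 2}"
  then have J: "J \<subseteq> {..<4}" "card J = 2" by auto
  then obtain x y where xy: "J = {x,y}" "x \<noteq> y" by (auto simp: card_2_iff)
  then have "x \<in> {0,1,2,3}" "y \<in> {0,1,2,3}" using J(1) by auto
  then show "J \<in> {{0,1},{0,2},{0,3},{1,2},{1,3},{2,3}}" using xy by (auto simp: doubleton_eq_iff)
qed auto

lemma sum_J2: "(\<Sum>J\<in>{J. J \<subseteq> {..<4::nat} \<and> card J = 2}. F J) = F {0,1} + F {0,2} + F {0,3} + F {1,2} + F {1,3} + F {2,3}"
  unfolding J2_eq by (simp add: doubleton_eq_iff add.assoc)

lemma sum_J2': "(\<Sum>J\<in>{J. J \<subseteq> {0,1,2,3::nat} \<and> card J = 2}. F J) = F {0,1} + F {0,2} + F {0,3} + F {1,2} + F {1,3} + F {2,3}"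
  using sum_J2[of F] by (simp add: lt4)


lemma act_eval: "i < j \<Longrightarrow> act {i,j} k m = eta j k * (if m = i then 1 else 0) - eta i k * (if m = j then 1 else 0)"
  by (simp add: act_def Let_def)

definition VS :: "(nat \<Rightarrow> nat \<Rightarrow> real) \<Rightarrow> (nat \<Rightarrow> nat \<Rightarrow> real) \<Rightarrow> coeffs" where
 "VS e S P K = (if P \<subseteq> {..<3} \<and> card P = 1 \<and> K \<subseteq> {..<4} \<and> card K = 2 then
     S (the_elem P) 0 * w2 (e 1) (e 2) K + S (the_elem P) 1 * w2 (e 2) (e 0) K
   + S (the_elem P) 2 * w2 (e 0) (e 1) K else 0)"

definition nx :: "nat \<Rightarrow> nat" where "nx c = (if c = 0 then 1 else if c = 1 then 2 else 0)"
definition pv :: "nat \<Rightarrow> nat" where "pv c = (if c = 0 then 2 else if c = 1 then 0 else 1)"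

definition Xc :: "(nat \<Rightarrow> nat \<Rightarrow> real) \<Rightarrow> (nat \<Rightarrow> nat \<Rightarrow> real) \<Rightarrow> nat \<Rightarrow> nat \<Rightarrow> nat \<Rightarrow> real" where
 "Xc g S a b c = S a (pv c) * g (nx c) b - S b (pv c) * g (nx c) a
    - S a (nx c) * g (pv c) b + S b (nx c) * g (pv c) a"

lemma beval01: "m < 4 \<Longrightarrow> bracket (VS e S) e {0,1} {m} =
   Xc (pullback_metric e) S 0 1 0 * e 0 m + Xc (pullback_metric e) S 0 1 1 * e 1 m + Xc (pullback_metric e) S 0 1 2 * e 2 m"
proof -
  assume "m < 4"
  then have "m = 0 \<or> m = 1 \<or> m = 2 \<or> m = 3" by auto
  then show ?thesis
    unfolding bracket_def sum_J2 by (elim disjE) (simp_all add: act_eval lt4 lt3 VS_def Xc_def ev pullback_metric_def eta_def nx_def pv_def algebra_simps)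
qed

lemma card1_3: "P \<subseteq> {..<3::nat} \<Longrightarrow> card P = 1 \<Longrightarrow> P = {0} \<or> P = {1} \<or> P = {2}"
  by (auto simp: card_1_singleton_iff lt3)
lemma card2_3: "P \<subseteq> {..<3::nat} \<Longrightarrow> card P = 2 \<Longrightarrow> P = {0,1} \<or> P = {0,2} \<or> P = {1,2}"
proof -
  assume h: "P \<subseteq> {..<3::nat}" "card P = 2"
  then obtain x y where xy: "P = {x,y}" "x \<noteq> y" by (auto simp: card_2_iff)
  then have "x \<in> {0,1,2}" "y \<in> {0,1,2}" using h(1) by auto
  then show ?thesis using xy by (auto simp: doubleton_eq_iff)
qed

lemma card3_3: "P \<subseteq> {..<3::nat} \<Longrightarrow> card P = 3 \<Longrightarrow> P = {0,1,2}"
  by (metis card_lessThan card_subset_eq finite_lessThan lt3)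
lemma card1_4: "K \<subseteq> {..<4::nat} \<Longrightarrow> card K = 1 \<Longrightarrow> \<exists>m<4. K = {m}"
  by (auto simp: card_1_singleton_iff)
lemma card2_4: "K \<subseteq> {..<4::nat} \<Longrightarrow> card K = 2 \<Longrightarrow> K \<in> {{0,1},{0,2},{0,3},{1,2},{1,3},{2,3}}"
  using J2_eq by blast
lemma card3_4: "K \<subseteq> {..<4::nat} \<Longrightarrow> card K = 3 \<Longrightarrow> K \<in> {{0,1,2},{0,1,3},{0,2,3},{1,2,3}}"
proof -
  assume h: "K \<subseteq> {..<4::nat}" "card K = 3"
  have "K \<noteq> {..<4}" using h(2) by auto
  then obtain z where z: "z < 4" "z \<notin> K" using h(1) by auto
  have sub: "K \<subseteq> {..<4} - {z}" using h(1) z by auto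
  have "card ({..<4::nat} - {z}) = 3" using z by simp
  then have "K = {..<4} - {z}" using card_subset_eq[OF _ sub] h(2) by simp
  moreover have "z = 0 \<or> z = 1 \<or> z = 2 \<or> z = 3" using z by auto
  ultimately show ?thesis by (auto simp: lt4 insert_Diff_if)
qed

lemma wedge_forms:
  assumes "X \<in> forms p k" shows "wedge_e e X \<in> forms (Suc p) (Suc k)"
  unfolding forms_def
proof (intro CollectI allI impI)
  fix Q L assume nz: "wedge_e e X Q L \<noteq> 0"
  then have QL: "Q \<subseteq> {..<3}" "L \<subseteq> {..<4}" unfolding wedge_e_def by (auto split: if_splits)
  then have fin: "finite Q" "finite L" by (auto intro: finite_subset)
  from nz QL have "(\<Sum>a\<in>Q. \<Sum>i\<in>L. X (Q - {a}) (L - {i}) * e a i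
                         * ins_sign (Q - {a}) a * ins_sign (L - {i}) i) \<noteq> 0"
    unfolding wedge_e_def by simp
  then obtain a where a: "a \<in> Q" "(\<Sum>i\<in>L. X (Q - {a}) (L - {i}) * e a i
                         * ins_sign (Q - {a}) a * ins_sign (L - {i}) i) \<noteq> 0"
    by (meson sum.neutral)
  then obtain i where i: "i \<in> L" "X (Q - {a}) (L - {i}) * e a i
                         * ins_sign (Q - {a}) a * ins_sign (L - {i}) i \<noteq> 0"
    by (meson sum.neutral)
  then have "X (Q - {a}) (L - {i}) \<noteq> 0" by auto
  then have "card (Q - {a}) = p" "card (L - {i}) = k" using assms unfolding forms_def by auto
  then have "card Q = Suc p" "card L = Suc k" using a(1) i(1) fin
    by (metis card_Suc_Diff1)+
  then show "Q \<subseteq> {..<3} \<and> card Q = Suc p \<and> L \<subseteq> {..<4} \<and> card L = Suc k" using QL by simp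
qed

lemma VS_forms: "VS e S \<in> forms 1 2"
  unfolding forms_def VS_def by auto
lemma bracket_forms: "bracket v e \<in> forms 2 1"
  unfolding forms_def bracket_def by (auto split: if_splits)

lemma eq12:
  assumes "X \<in> forms 1 2" "Y \<in> forms 1 2"
    "\<And>a J. a < 3 \<Longrightarrow> J \<in> {{0,1},{0,2},{0,3},{1,2},{1,3},{2,3}} \<Longrightarrow> X {a} J = Y {a} J"
  shows "X = Y"
proof (intro ext)
  fix P K
  show "X P K = Y P K"
  proof (cases "P \<subseteq> {..<3} \<and> card P = 1 \<and> K \<subseteq> {..<4} \<and> card K = 2")
    case True
    then obtain a where "P = {a}" "a < 3" by (auto simp: card_1_singleton_iff)
    moreover have "K \<in> {{0,1},{0,2},{0,3},{1,2},{1,3},{2,3}}" using True card2_4 by blast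
    ultimately show ?thesis using assms(3) by blast
  next
    case False
    then have "X P K = 0" "Y P K = 0" using assms(1,2) unfolding forms_def by blast+
    then show ?thesis by simp
  qed
qed

lemma eq21:
  assumes "X \<in> forms 2 1" "Y \<in> forms 2 1"
    "\<And>Q m. Q \<in> {{0,1},{0,2},{1,2}} \<Longrightarrow> m < 4 \<Longrightarrow> X Q {m} = Y Q {m}"
  shows "X = Y"
proof (intro ext)
  fix P K
  show "X P K = Y P K"
  proof (cases "P \<subseteq> {..<3} \<and> card P = 2 \<and> K \<subseteq> {..<4} \<and> card K = 1")
    case True
    then obtain m where "K = {m}" "m < 4" using card1_4 by blast
    moreover have "P \<in> {{0,1},{0,2},{1,2}}" using True card2_3 by blast
    ultimately show ?thesis using assms(3) by blast
  next
    case False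
    then have "X P K = 0" "Y P K = 0" using assms(1,2) unfolding forms_def by blast+
    then show ?thesis by simp
  qed
qed

lemma eq32:
  assumes "X \<in> forms 3 2" "Y \<in> forms 3 2"
    "\<And>J. J \<in> {{0,1},{0,2},{0,3},{1,2},{1,3},{2,3}} \<Longrightarrow> X {0,1,2} J = Y {0,1,2} J"
  shows "X = Y"
proof (intro ext)
  fix P K
  show "X P K = Y P K"
  proof (cases "P \<subseteq> {..<3} \<and> card P = 3 \<and> K \<subseteq> {..<4} \<and> card K = 2")
    case True
    then have "P = {0,1,2}" using card3_3 by blast
    moreover have "K \<in> {{0,1},{0,2},{0,3},{1,2},{1,3},{2,3}}" using True card2_4 by blast
    ultimately show ?thesis using assms(3) by blast
  next
    case False
    then have "X P K = 0" "Y P K = 0" using assms(1,2) unfolding forms_def by blast+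
    then show ?thesis by simp
  qed
qed

lemma eq23:
  assumes "X \<in> forms 2 3" "Y \<in> forms 2 3"
    "\<And>Q L. Q \<in> {{0,1},{0,2},{1,2}} \<Longrightarrow> L \<in> {{0,1,2},{0,1,3},{0,2,3},{1,2,3}} \<Longrightarrow> X Q L = Y Q L"
  shows "X = Y"
proof (intro ext)
  fix P K
  show "X P K = Y P K"
  proof (cases "P \<subseteq> {..<3} \<and> card P = 2 \<and> K \<subseteq> {..<4} \<and> card K = 3")
    case True
    then have "P \<in> {{0,1},{0,2},{1,2}}" using card2_3 by blast
    moreover have "K \<in> {{0,1,2},{0,1,3},{0,2,3},{1,2,3}}" using True card3_4 by blast
    ultimately show ?thesis using assms(3) by blast
  next
    case False
    then have "X P K = 0" "Y P K = 0" using assms(1,2) unfolding forms_def by blast+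
    then show ?thesis by simp
  qed
qed

lemma beval02: "m < 4 \<Longrightarrow> bracket (VS e S) e {0,2} {m} =
   Xc (pullback_metric e) S 0 2 0 * e 0 m + Xc (pullback_metric e) S 0 2 1 * e 1 m + Xc (pullback_metric e) S 0 2 2 * e 2 m"
proof -
  assume "m < 4"
  then have "m = 0 \<or> m = 1 \<or> m = 2 \<or> m = 3" by auto
  then show ?thesis
    unfolding bracket_def sum_J2 by (elim disjE) (simp_all add: act_eval lt4 lt3 VS_def Xc_def ev pullback_metric_def eta_def nx_def pv_def algebra_simps)
qed
lemma beval12: "m < 4 \<Longrightarrow> bracket (VS e S) e {1,2} {m} =
   Xc (pullback_metric e) S 1 2 0 * e 0 m + Xc (pullback_metric e) S 1 2 1 * e 1 m + Xc (pullback_metric e) S 1 2 2 * e 2 m"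
proof -
  assume "m < 4"
  then have "m = 0 \<or> m = 1 \<or> m = 2 \<or> m = 3" by auto
  then show ?thesis
    unfolding bracket_def sum_J2 by (elim disjE) (simp_all add: act_eval lt4 lt3 VS_def Xc_def ev pullback_metric_def eta_def nx_def pv_def algebra_simps)
qed

lemma pb_sym: "pullback_metric e a b = pullback_metric e b a"
  unfolding pullback_metric_def eta_def by (simp add: lt4 algebra_simps)

definition symm3 :: "(nat \<Rightarrow> nat \<Rightarrow> real) \<Rightarrow> bool" where
  "symm3 S \<longleftrightarrow> S 1 0 = S 0 1 \<and> S 2 0 = S 0 2 \<and> S 2 1 = S 1 2"

lemma Xc_rel:
  assumes "symm3 S" "symm3 g"
  shows "Xc g S 0 2 0 = - Xc g S 1 2 1" "Xc g S 0 1 0 = Xc g S 1 2 2" "Xc g S 0 1 1 = - Xc g S 0 2 2"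
  using assms unfolding symm3_def Xc_def nx_def pv_def by (simp_all add: algebra_simps)

lemma pb_symm3: "symm3 (pullback_metric e)"
  unfolding symm3_def using pb_sym by metis

lemma C1:
  assumes "symm3 S"
  shows "W e 1 2 (VS e S) = (\<lambda>_ _. 0)"
proof (rule eq23)
  show "W e 1 2 (VS e S) \<in> forms 2 3" unfolding W_def using wedge_forms[OF VS_forms, of e] by (simp add: numeral_2_eq_2 numeral_3_eq_3)
  show "(\<lambda>_ _. 0) \<in> forms 2 3" unfolding forms_def by simp
  fix Q L :: "nat set" assume "Q \<in> {{0,1},{0,2},{1,2}}" "L \<in> {{0,1,2},{0,1,3},{0,2,3},{1,2,3}}"
  then show "W e 1 2 (VS e S) Q L = 0" using assms unfolding symm3_def
    by (elim insertE emptyE) (simp_all add: evW VS_def ev algebra_simps)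
qed

lemma C2:
  assumes "symm3 S"
  shows "W e 2 1 (bracket (VS e S) e) = (\<lambda>_ _. 0)"
proof (rule eq32)
  show "W e 2 1 (bracket (VS e S) e) \<in> forms 3 2" unfolding W_def using wedge_forms[OF bracket_forms, of e] by (simp add: numeral_2_eq_2 numeral_3_eq_3)
  show "(\<lambda>_ _. 0) \<in> forms 3 2" unfolding forms_def by simp
  have r: "Xc (pullback_metric e) S 0 2 0 = - Xc (pullback_metric e) S 1 2 1"
     "Xc (pullback_metric e) S 0 1 0 = Xc (pullback_metric e) S 1 2 2"
     "Xc (pullback_metric e) S 0 1 1 = - Xc (pullback_metric e) S 0 2 2"
    using Xc_rel[OF assms pb_symm3] by auto
  fix J :: "nat set" assume "J \<in> {{0,1},{0,2},{0,3},{1,2},{1,3},{2,3}}"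
  then show "W e 2 1 (bracket (VS e S) e) {0,1,2} J = 0"
    using beval01[of 0 e S] beval01[of 1 e S] beval01[of 2 e S] beval01[of 3 e S]
      beval02[of 0 e S] beval02[of 1 e S] beval02[of 2 e S] beval02[of 3 e S]
      beval12[of 0 e S] beval12[of 1 e S] beval12[of 2 e S] beval12[of 3 e S]
    apply (elim insertE emptyE)
    apply (simp_all add: evW insert_Diff_if)
    using r by (simp_all add: algebra_simps)
qed

definition Zm :: "(nat \<Rightarrow> nat \<Rightarrow> real) \<Rightarrow> (nat \<Rightarrow> nat \<Rightarrow> real) \<Rightarrow> nat \<Rightarrow> nat \<Rightarrow> real" where
  "Zm g S h c = Xc g S (nx h) (pv h) c"
definition Zinv :: "(nat \<Rightarrow> nat \<Rightarrow> real) \<Rightarrow> (nat \<Rightarrow> nat \<Rightarrow> real) \<Rightarrow> nat \<Rightarrow> nat \<Rightarrow> real" where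
  "Zinv g Z i j = (\<Sum>p<3. \<Sum>q<3. g i p * Z p q * g q j) - (\<Sum>p<3. \<Sum>q<3. Z p q * g q p) / 2 * g i j"
definition detg :: "(nat \<Rightarrow> nat \<Rightarrow> real) \<Rightarrow> real" where
  "detg g = g 0 0 * g 1 1 * g 2 2 + g 0 1 * g 1 2 * g 2 0 + g 0 2 * g 1 0 * g 2 1
          - g 0 0 * g 1 2 * g 2 1 - g 0 1 * g 1 0 * g 2 2 - g 0 2 * g 1 1 * g 2 0"

lemma Z1:
  assumes "symm3 g" "symm3 T" "i < 3" "j < 3"
  shows "detg g * T i j = Zinv g (Zm g T) i j"
proof -
  have "i = 0 \<or> i = 1 \<or> i = 2" "j = 0 \<or> j = 1 \<or> j = 2" using assms by auto
  then show ?thesis using assms(1,2) unfolding symm3_def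
    by (elim disjE) (simp_all add: Zinv_def Zm_def Xc_def nx_def pv_def detg_def lt3 field_simps)
qed

lemma Z2:
  assumes "symm3 g" "symm3 Z" "i < 3" "j < 3"
  shows "Zm g (Zinv g Z) i j = detg g * Z i j"
proof -
  have "i = 0 \<or> i = 1 \<or> i = 2" "j = 0 \<or> j = 1 \<or> j = 2" using assms by auto
  then show ?thesis using assms(1,2) unfolding symm3_def
    by (elim disjE) (simp_all add: Zinv_def Zm_def Xc_def nx_def pv_def detg_def lt3 field_simps)
qed

lemma Z3:
  assumes "symm3 g" "symm3 Z"
  shows "symm3 (Zinv g Z)"
  using assms unfolding symm3_def by (simp add: Zinv_def lt3 field_simps)

definition nn :: "(nat \<Rightarrow> nat \<Rightarrow> real) \<Rightarrow> nat \<Rightarrow> real" where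
  "nn e i = (if i = 0 then -1 else 1) * det4 (e 0) (e 1) (e 2) (\<lambda>j. if j = i then 1 else 0)"

lemma D_nn: "det4 (e 0) (e 1) (e 2) (nn e) = - detg (pullback_metric e)"
  by (simp add: ev nn_def detg_def pullback_metric_def eta_def lt4 algebra_simps)

lemma fw_zero[simp]: "fw (\<lambda>_. 0) x L = 0" by (simp add: fw_def)

lemma stepA_sym:
  assumes k: "W e 1 2 v = (\<lambda>_ _. 0)" and ab: "a < 3" "b < 3"
  shows "P2 (v {a}) (e b) x = P2 (v {b}) (e a) x"
proof -
  have z: "W e 1 2 v Q = (\<lambda>_. 0)" for Q using k by simp
  have "a = 0 \<or> a = 1 \<or> a = 2" "b = 0 \<or> b = 1 \<or> b = 2" using ab by auto
  then show ?thesis using idA01[of v e x] idA02[of v e x] idA12[of v e x] z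
    by (elim disjE) (simp_all add: algebra_simps)
qed

lemma stepA_zero:
  assumes k: "W e 1 2 v = (\<lambda>_ _. 0)" and ab: "a < 3" "x < 3" "y < 3"
  shows "P2 (v {a}) (e x) (e y) = 0"
proof -
  have "P2 (v {a}) (e x) (e y) = P2 (v {x}) (e a) (e y)" using stepA_sym[OF k, of a x] ab by blast
  also have "... = - P2 (v {x}) (e y) (e a)" by (rule P2_anti)
  also have "... = - P2 (v {y}) (e x) (e a)" using stepA_sym[OF k, of x y] ab by simp
  also have "... = P2 (v {y}) (e a) (e x)" using P2_anti[of "v {y}" "e x" "e a"] by simp
  also have "... = P2 (v {a}) (e y) (e x)" using stepA_sym[OF k, of y a] ab by simp
  also have "... = - P2 (v {a}) (e x) (e y)" by (rule P2_anti)
  finally show ?thesis by simp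
qed

lemma stepA:
  fixes e :: "nat \<Rightarrow> nat \<Rightarrow> real" and f :: "nat \<Rightarrow> real"
  assumes v: "v \<in> forms 1 2" and k: "W e 1 2 v = (\<lambda>_ _. 0)" and D: "det4 (e 0) (e 1) (e 2) f \<noteq> 0"
  shows "v = VS e (\<lambda>a c. P2 (v {a}) (e c) f / det4 (e 0) (e 1) (e 2) f)"
proof (rule eq12[OF v VS_forms])
  fix a :: nat and J :: "nat set" assume a: "a < 3" and J: "J \<in> {{0,1},{0,2},{0,3},{1,2},{1,3},{2,3}}"
  let ?D = "det4 (e 0) (e 1) (e 2) f"
  have cb: "?D * v {a} J =
     P2 (v {a}) (e 0) f * w2 (e 1) (e 2) J + P2 (v {a}) (e 1) f * w2 (e 2) (e 0) J + P2 (v {a}) (e 2) f * w2 (e 0) (e 1) J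
   + P2 (v {a}) (e 1) (e 2) * w2 (e 0) f J + P2 (v {a}) (e 2) (e 0) * w2 (e 1) f J + P2 (v {a}) (e 0) (e 1) * w2 (e 2) f J"
    by (rule cramer_biv) (use J in auto)
  have z: "P2 (v {a}) (e 1) (e 2) = 0" "P2 (v {a}) (e 2) (e 0) = 0" "P2 (v {a}) (e 0) (e 1) = 0"
    using stepA_zero[OF k] a by auto
  have vs: "VS e S {a} J = S a 0 * w2 (e 1) (e 2) J + S a 1 * w2 (e 2) (e 0) J + S a 2 * w2 (e 0) (e 1) J" for S
    using a J unfolding VS_def by auto
  show "v {a} J = VS e (\<lambda>a c. P2 (v {a}) (e c) f / ?D) {a} J"
    unfolding vs using cb z D by (simp add: field_simps)
qed

definition gam :: "(nat \<Rightarrow> nat \<Rightarrow> real) \<Rightarrow> (nat \<Rightarrow> real) \<Rightarrow> (nat \<Rightarrow> real) \<Rightarrow> nat \<Rightarrow> real" where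
  "gam e f w c = (if c = 0 then det4 w (e 1) (e 2) f else if c = 1 then det4 (e 0) w (e 2) f
     else if c = 2 then det4 (e 0) (e 1) w f else det4 (e 0) (e 1) (e 2) w)"

definition Zgam :: "(nat \<Rightarrow> nat \<Rightarrow> real) \<Rightarrow> (nat \<Rightarrow> real) \<Rightarrow> coeffs \<Rightarrow> nat \<Rightarrow> nat \<Rightarrow> real" where
  "Zgam e f X h c = (if h = 0 then gam e f (\<lambda>m. X {1,2} {m}) c
     else if h = 1 then - gam e f (\<lambda>m. X {0,2} {m}) c else gam e f (\<lambda>m. X {0,1} {m}) c)"

lemma R3: "P2 (W e 2 1 X {0,1,2}) (e 0) (e 1) = - det4 (e 0) (e 1) (e 2) (\<lambda>m. X {0,1} {m})"
          "P2 (W e 2 1 X {0,1,2}) (e 1) (e 2) = - det4 (e 0) (e 1) (e 2) (\<lambda>m. X {1,2} {m})"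
          "P2 (W e 2 1 X {0,1,2}) (e 0) (e 2) = - det4 (e 0) (e 1) (e 2) (\<lambda>m. X {0,2} {m})"
  by (simp_all add: ev evW algebra_simps)

lemma Rs: "P2 (W e 2 1 X {0,1,2}) (e 0) f = - Zgam e f X 1 2 + Zgam e f X 2 1"
          "P2 (W e 2 1 X {0,1,2}) (e 1) f = Zgam e f X 0 2 - Zgam e f X 2 0"
          "P2 (W e 2 1 X {0,1,2}) (e 2) f = - Zgam e f X 0 1 + Zgam e f X 1 0"
  by (simp_all add: ev evW Zgam_def gam_def algebra_simps)

lemma fw_zero': "fw (\<lambda>_. 0) x = (\<lambda>_. 0)" by (rule ext) (simp add: fw_def)

lemma Xc_anti: "Xc g S b a c = - Xc g S a b c"
  by (simp add: Xc_def)

lemma Zm_scale: "Zm g (\<lambda>i j. T i j / k) h c = Zm g T h c / k"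
  by (simp add: Zm_def Xc_def diff_divide_distrib add_divide_distrib)

lemma finish_lem:
  fixes B x D :: real
  assumes "B = a0 * y0 + a1 * y1 + a2 * y2" "a0 = g0 / D" "a1 = g1 / D" "a2 = g2 / D"
    "D * x = g0 * y0 + g1 * y1 + g2 * y2 + g3 * y3" "g3 = 0" "D \<noteq> 0"
  shows "B = x"
proof -
  have "B * D = g0 * y0 + g1 * y1 + g2 * y2" using assms(1-4,7) by (simp add: field_simps)
  moreover have "x * D = g0 * y0 + g1 * y1 + g2 * y2" using assms(5,6) by (simp add: algebra_simps)
  ultimately have "B * D = x * D" by simp
  then show ?thesis using assms(7) by simp
qed

lemma stepD:
  assumes X: "X \<in> forms 2 1" and k: "W e 2 1 X = (\<lambda>_ _. 0)"
    and D: "det4 (e 0) (e 1) (e 2) f \<noteq> 0" and dg: "detg (pullback_metric e) \<noteq> 0"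
  defines "S \<equiv> (\<lambda>i j. Zinv (pullback_metric e) (Zgam e f X) i j / (det4 (e 0) (e 1) (e 2) f * detg (pullback_metric e)))"
  shows "symm3 S" and "bracket (VS e S) e = X"
proof -
  let ?G = "pullback_metric e" and ?D = "det4 (e 0) (e 1) (e 2) f"
  have z: "W e 2 1 X {0,1,2} = (\<lambda>_. 0)" using k by simp
  have r3: "det4 (e 0) (e 1) (e 2) (\<lambda>m. X {0,1} {m}) = 0" "det4 (e 0) (e 1) (e 2) (\<lambda>m. X {1,2} {m}) = 0"
     "det4 (e 0) (e 1) (e 2) (\<lambda>m. X {0,2} {m}) = 0"
    using R3[of e X] unfolding z by (simp_all add: P2_def fw_zero')
  have rs: "Zgam e f X 2 1 = Zgam e f X 1 2" "Zgam e f X 2 0 = Zgam e f X 0 2" "Zgam e f X 1 0 = Zgam e f X 0 1"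
    using Rs[of e X f] unfolding z by (simp_all add: P2_def fw_zero')
  have sz: "symm3 (Zgam e f X)" unfolding symm3_def using rs by simp
  have sS0: "symm3 (Zinv ?G (Zgam e f X))" by (rule Z3[OF pb_symm3 sz])
  then show "symm3 S" unfolding symm3_def S_def by simp
  have zm: "Zm ?G S h c = Zgam e f X h c / ?D" if "h < 3" "c < 3" for h c
  proof -
    have "Zm ?G S h c = Zm ?G (Zinv ?G (Zgam e f X)) h c / (?D * detg ?G)"
      unfolding S_def by (rule Zm_scale)
    also have "... = Zgam e f X h c / ?D"
      using Z2[OF pb_symm3 sz that] dg by (simp add: field_simps)
    finally show ?thesis .
  qed
  have xc01: "Xc ?G S 0 1 c = gam e f (\<lambda>m. X {0,1} {m}) c / ?D" if "c < 3" for c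
    using zm[of 2 c] that by (simp add: Zm_def nx_def pv_def Zgam_def)
  have xc12: "Xc ?G S 1 2 c = gam e f (\<lambda>m. X {1,2} {m}) c / ?D" if "c < 3" for c
    using zm[of 0 c] that by (simp add: Zm_def nx_def pv_def Zgam_def)
  have xc02: "Xc ?G S 0 2 c = gam e f (\<lambda>m. X {0,2} {m}) c / ?D" if "c < 3" for c
    using zm[of 1 c] that Xc_anti[of ?G S 2 0 c] by (simp add: Zm_def nx_def pv_def Zgam_def)
  show "bracket (VS e S) e = X"
  proof (rule eq21[OF bracket_forms X])
    fix Q :: "nat set" and m :: nat assume Q: "Q \<in> {{0,1},{0,2},{1,2}}" and m: "m < 4"
    have cv: "?D * w m = gam e f w 0 * e 0 m + gam e f w 1 * e 1 m + gam e f w 2 * e 2 m + gam e f w 3 * f m" for w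
      using cramer_vec[OF m, of "e 0" "e 1" "e 2" f w] by (simp add: gam_def)
    from Q show "bracket (VS e S) e Q {m} = X Q {m}"
    proof (elim insertE emptyE)
      assume Qe: "Q = {0,1}"
      show ?thesis unfolding Qe
        by (intro finish_lem[OF beval01[OF m, of e S] xc01[of 0] xc01[of 1] xc01[of 2] cv[of "\<lambda>m. X {0,1} {m}"] _ D])
           (use r3 in \<open>simp_all add: gam_def\<close>)
    next
      assume Qe: "Q = {0,2}"
      show ?thesis unfolding Qe
        by (intro finish_lem[OF beval02[OF m, of e S] xc02[of 0] xc02[of 1] xc02[of 2] cv[of "\<lambda>m. X {0,2} {m}"] _ D])
           (use r3 in \<open>simp_all add: gam_def\<close>)
    next
      assume Qe: "Q = {1,2}"
      show ?thesis unfolding Qe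
        by (intro finish_lem[OF beval12[OF m, of e S] xc12[of 0] xc12[of 1] xc12[of 2] cv[of "\<lambda>m. X {1,2} {m}"] _ D])
           (use r3 in \<open>simp_all add: gam_def\<close>)
    qed
  qed
qed

definition Xi :: "(nat \<Rightarrow> nat \<Rightarrow> real) \<Rightarrow> (nat \<Rightarrow> real) \<Rightarrow> coeffs \<Rightarrow> nat \<Rightarrow> nat \<Rightarrow> real" where
  "Xi e f Y h m =
    (if h = 0 then P2 (Y {0,1,2}) (e 1) f * e 2 m - P2 (Y {0,1,2}) (e 1) (e 2) * f m
     else if h = 1 then P2 (Y {0,1,2}) (e 2) f * e 0 m - P2 (Y {0,1,2}) (e 2) (e 0) * f m
     else P2 (Y {0,1,2}) (e 0) f * e 1 m - P2 (Y {0,1,2}) (e 0) (e 1) * f m)"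

definition Xe :: "(nat \<Rightarrow> nat \<Rightarrow> real) \<Rightarrow> (nat \<Rightarrow> real) \<Rightarrow> coeffs \<Rightarrow> coeffs" where
  "Xe e f Y P K = (if P \<subseteq> {..<3} \<and> card P = 2 \<and> K \<subseteq> {..<4} \<and> card K = 1 then
     (if 0 \<notin> P then Xi e f Y 0 (the_elem K) else if 1 \<notin> P then - Xi e f Y 1 (the_elem K)
      else Xi e f Y 2 (the_elem K)) / det4 (e 0) (e 1) (e 2) f else 0)"

lemma Xe_forms: "Xe e f Y \<in> forms 2 1"
  unfolding forms_def Xe_def by auto

lemma stepE:
  assumes Y: "Y \<in> forms 3 2" and D: "det4 (e 0) (e 1) (e 2) f \<noteq> 0"
  shows "W e 2 1 (Xe e f Y) = Y"
proof (rule eq32)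
  show "W e 2 1 (Xe e f Y) \<in> forms 3 2" unfolding W_def using wedge_forms[OF Xe_forms, of e e f Y]
    by (simp add: numeral_2_eq_2 numeral_3_eq_3)
  show "Y \<in> forms 3 2" by (rule Y)
  fix J :: "nat set" assume J: "J \<in> {{0,1},{0,2},{0,3},{1,2},{1,3},{2,3}}"
  let ?D = "det4 (e 0) (e 1) (e 2) f" and ?Y = "Y {0,1,2}"
  have cb: "?D * ?Y J =
     P2 ?Y (e 0) f * w2 (e 1) (e 2) J + P2 ?Y (e 1) f * w2 (e 2) (e 0) J + P2 ?Y (e 2) f * w2 (e 0) (e 1) J
   + P2 ?Y (e 1) (e 2) * w2 (e 0) f J + P2 ?Y (e 2) (e 0) * w2 (e 1) f J + P2 ?Y (e 0) (e 1) * w2 (e 2) f J"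
    by (rule cramer_biv) (use J in auto)
  have ev2: "?D * W e 2 1 (Xe e f Y) {0,1,2} J =
     P2 ?Y (e 0) f * w2 (e 1) (e 2) J + P2 ?Y (e 1) f * w2 (e 2) (e 0) J + P2 ?Y (e 2) f * w2 (e 0) (e 1) J
   + P2 ?Y (e 1) (e 2) * w2 (e 0) f J + P2 ?Y (e 2) (e 0) * w2 (e 1) f J + P2 ?Y (e 0) (e 1) * w2 (e 2) f J"
    using J D by (elim insertE emptyE) (simp_all add: evW insert_Diff_if Xe_def Xi_def fw_def one0_def w2_def field_simps)
  show "W e 2 1 (Xe e f Y) {0,1,2} J = Y {0,1,2} J"
    using cb ev2 D by (metis mult_left_cancel)
qed

lemma nd_use:
  assumes nd: "nondeg_form e"
    and h: "\<And>m. m < 4 \<Longrightarrow> p0 * e 0 m + p1 * e 1 m + p2 * e 2 m = q0 * e 0 m + q1 * e 1 m + q2 * e 2 m"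
  shows "p0 = q0 \<and> p1 = q1 \<and> p2 = q2"
proof -
  define u where "u c = (if c = 0 then p0 - q0 else if c = 1 then p1 - q1 else p2 - q2)" for c :: nat
  have "\<forall>i<4. (\<Sum>a<3. u a * e a i) = 0"
  proof (intro allI impI)
    fix i :: nat assume "i < 4"
    from h[OF this] show "(\<Sum>a<3. u a * e a i) = 0" by (simp add: u_def lt3 algebra_simps)
  qed
  then have "\<forall>a<3. u a = 0" using nd unfolding nondeg_form_def by blast
  then have "u 0 = 0" "u 1 = 0" "u 2 = 0" by auto
  then show ?thesis by (simp add: u_def)
qed

lemma Zinv_cong:
  assumes "\<And>p q. p < 3 \<Longrightarrow> q < 3 \<Longrightarrow> Z p q = Z' p q"
  shows "Zinv g Z i j = Zinv g Z' i j"
  unfolding Zinv_def lt3 using assms by simp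

lemma stepA_symm3:
  assumes k: "W e 1 2 v = (\<lambda>_ _. 0)"
  shows "symm3 (\<lambda>a c. P2 (v {a}) (e c) f / det4 (e 0) (e 1) (e 2) f)"
  unfolding symm3_def using stepA_sym[OF k, of 1 0 f] stepA_sym[OF k, of 2 0 f] stepA_sym[OF k, of 2 1 f] by simp

lemma inj_core:
  assumes nd: "nondeg_form e" and D: "det4 (e 0) (e 1) (e 2) f \<noteq> 0" and dg: "detg (pullback_metric e) \<noteq> 0"
    and v: "v \<in> forms 1 2" "W e 1 2 v = (\<lambda>_ _. 0)"
    and v': "v' \<in> forms 1 2" "W e 1 2 v' = (\<lambda>_ _. 0)"
    and br: "bracket v e = bracket v' e"
  shows "v = v'"
proof -
  let ?G = "pullback_metric e" and ?D = "det4 (e 0) (e 1) (e 2) f"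
  define S where "S = (\<lambda>a c. P2 (v {a}) (e c) f / ?D)"
  define S' where "S' = (\<lambda>a c. P2 (v' {a}) (e c) f / ?D)"
  have vS: "v = VS e S" unfolding S_def by (rule stepA[OF v D])
  have vS': "v' = VS e S'" unfolding S'_def by (rule stepA[OF v' D])
  have sS: "symm3 S" unfolding S_def by (rule stepA_symm3[OF v(2)])
  have sS': "symm3 S'" unfolding S'_def by (rule stepA_symm3[OF v'(2)])
  have bS: "bracket (VS e S) e = bracket (VS e S') e" using br vS vS' by simp
  have x01: "Xc ?G S 0 1 c = Xc ?G S' 0 1 c" if "c < 3" for c
  proof -
    have "Xc ?G S 0 1 0 = Xc ?G S' 0 1 0 \<and> Xc ?G S 0 1 1 = Xc ?G S' 0 1 1 \<and> Xc ?G S 0 1 2 = Xc ?G S' 0 1 2"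
      by (rule nd_use[OF nd]) (metis beval01 bS)
    moreover have "c = 0 \<or> c = 1 \<or> c = 2" using that by auto
    ultimately show ?thesis by auto
  qed
  have x02: "Xc ?G S 0 2 c = Xc ?G S' 0 2 c" if "c < 3" for c
  proof -
    have "Xc ?G S 0 2 0 = Xc ?G S' 0 2 0 \<and> Xc ?G S 0 2 1 = Xc ?G S' 0 2 1 \<and> Xc ?G S 0 2 2 = Xc ?G S' 0 2 2"
      by (rule nd_use[OF nd]) (metis beval02 bS)
    moreover have "c = 0 \<or> c = 1 \<or> c = 2" using that by auto
    ultimately show ?thesis by auto
  qed
  have x12: "Xc ?G S 1 2 c = Xc ?G S' 1 2 c" if "c < 3" for c
  proof -
    have "Xc ?G S 1 2 0 = Xc ?G S' 1 2 0 \<and> Xc ?G S 1 2 1 = Xc ?G S' 1 2 1 \<and> Xc ?G S 1 2 2 = Xc ?G S' 1 2 2"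
      by (rule nd_use[OF nd]) (metis beval12 bS)
    moreover have "c = 0 \<or> c = 1 \<or> c = 2" using that by auto
    ultimately show ?thesis by auto
  qed
  have zm: "Zm ?G S h c = Zm ?G S' h c" if "h < 3" "c < 3" for h c
  proof -
    have "h = 0 \<or> h = 1 \<or> h = 2" using that by auto
    then show ?thesis using x01[OF that(2)] x02[OF that(2)] x12[OF that(2)]
      Xc_anti[of ?G S 2 0 c] Xc_anti[of ?G S' 2 0 c]
      by (elim disjE) (simp_all add: Zm_def nx_def pv_def)
  qed
  have SS: "S i j = S' i j" if "i < 3" "j < 3" for i j
  proof -
    have "detg ?G * S i j = Zinv ?G (Zm ?G S) i j" by (rule Z1[OF pb_symm3 sS that])
    also have "... = Zinv ?G (Zm ?G S') i j" by (rule Zinv_cong) (rule zm)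
    also have "... = detg ?G * S' i j" by (rule Z1[OF pb_symm3 sS' that, symmetric])
    finally show ?thesis using dg by simp
  qed
  show "v = v'" unfolding vS vS'
  proof (rule eq12[OF VS_forms VS_forms])
    fix a :: nat and J :: "nat set" assume a: "a < 3" and J: "J \<in> {{0,1},{0,2},{0,3},{1,2},{1,3},{2,3}}"
    have vs: "VS e T {a} J = T a 0 * w2 (e 1) (e 2) J + T a 1 * w2 (e 2) (e 0) J + T a 2 * w2 (e 0) (e 1) J" for T
      using a J unfolding VS_def by auto
    show "VS e S {a} J = VS e S' {a} J" unfolding vs using SS[OF a] by simp
  qed
qed
lemma detg_nz:
  assumes nd: "nondegenerate3 g"
  shows "detg g \<noteq> 0"
proof -
  define M :: "real^3^3" where
    "M = vector [vector [g 0 0, g 1 0, g 2 0], vector [g 0 1, g 1 1, g 2 1], vector [g 0 2, g 1 2, g 2 2]]"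
  have ker: "\<forall>x. M *v x = 0 \<longrightarrow> x = 0"
  proof (intro allI impI)
    fix x :: "real^3" assume Mx: "M *v x = 0"
    define u where "u a = (if a = 0 then x$1 else if a = 1 then x$2 else x$3)" for a :: nat
    have c: "(M *v x)$1 = 0" "(M *v x)$2 = 0" "(M *v x)$3 = 0" using Mx by simp_all
    have "\<forall>b<3. (\<Sum>a<3. u a * g a b) = 0"
    proof (intro allI impI)
      fix b :: nat assume "b < 3"
      then have "b = 0 \<or> b = 1 \<or> b = 2" by auto
      then show "(\<Sum>a<3. u a * g a b) = 0" using c
        by (elim disjE) (simp_all add: u_def M_def matrix_vector_mult_def sum_3 lt3 algebra_simps)
    qed
    then have "\<forall>a<3. u a = 0" using nd unfolding nondegenerate3_def by blast
    then have "u 0 = 0" "u 1 = 0" "u 2 = 0" by auto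
    then have "x$1 = 0" "x$2 = 0" "x$3 = 0" by (simp_all add: u_def)
    then show "x = 0" by (simp add: vec_eq_iff forall_3)
  qed
  then obtain B where "B ** M = mat 1" using matrix_left_invertible_ker by blast
  then have "M ** B = mat 1" using matrix_left_right_inverse by blast
  with \<open>B ** M = mat 1\<close> have "invertible M" unfolding invertible_def by blast
  then have "det M \<noteq> 0" using invertible_det_nz by blast
  moreover have "det M = detg g" by (simp add: det_3 M_def detg_def algebra_simps)
  ultimately show ?thesis by simp
qed

theorem corollary4p10:
  fixes e :: "nat \<Rightarrow> nat \<Rightarrow> real"
  assumes "nondeg_form e"
    and "nondegenerate3 (pullback_metric e)"
  shows "inj_on (\<lambda>v. bracket v e) {X \<in> forms 1 2. W e 1 2 X = (\<lambda>_ _. 0)}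
       \<and> (\<lambda>v. bracket v e) ` {X \<in> forms 1 2. W e 1 2 X = (\<lambda>_ _. 0)}
            = {X \<in> forms 2 1. W e 2 1 X = (\<lambda>_ _. 0)}
       \<and> W e 2 1 ` forms 2 1 = forms 3 2"
proof -
  define f where "f = nn e"
  have dg: "detg (pullback_metric e) \<noteq> 0" using detg_nz[OF assms(2)] .
  have D: "det4 (e 0) (e 1) (e 2) f \<noteq> 0" using D_nn[of e] dg unfolding f_def by simp
  have part1: "inj_on (\<lambda>v. bracket v e) {X \<in> forms 1 2. W e 1 2 X = (\<lambda>_ _. 0)}"
  proof (rule inj_onI)
    fix v v' assume "v \<in> {X \<in> forms 1 2. W e 1 2 X = (\<lambda>_ _. 0)}" "v' \<in> {X \<in> forms 1 2. W e 1 2 X = (\<lambda>_ _. 0)}"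
      "bracket v e = bracket v' e"
    then show "v = v'" using inj_core[OF assms(1) D dg] by blast
  qed
  have part2: "(\<lambda>v. bracket v e) ` {X \<in> forms 1 2. W e 1 2 X = (\<lambda>_ _. 0)}
            = {X \<in> forms 2 1. W e 2 1 X = (\<lambda>_ _. 0)}"
  proof
    show "(\<lambda>v. bracket v e) ` {X \<in> forms 1 2. W e 1 2 X = (\<lambda>_ _. 0)}
            \<subseteq> {X \<in> forms 2 1. W e 2 1 X = (\<lambda>_ _. 0)}"
    proof
      fix X assume "X \<in> (\<lambda>v. bracket v e) ` {X \<in> forms 1 2. W e 1 2 X = (\<lambda>_ _. 0)}"
      then obtain v where v: "v \<in> forms 1 2" "W e 1 2 v = (\<lambda>_ _. 0)" and X: "X = bracket v e" by blast
      have vS: "v = VS e (\<lambda>a c. P2 (v {a}) (e c) f / det4 (e 0) (e 1) (e 2) f)" by (rule stepA[OF v D])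
      have sS: "symm3 (\<lambda>a c. P2 (v {a}) (e c) f / det4 (e 0) (e 1) (e 2) f)" by (rule stepA_symm3[OF v(2)])
      have "W e 2 1 X = (\<lambda>_ _. 0)" unfolding X by (subst vS) (rule C2[OF sS])
      moreover have "X \<in> forms 2 1" unfolding X by (rule bracket_forms)
      ultimately show "X \<in> {X \<in> forms 2 1. W e 2 1 X = (\<lambda>_ _. 0)}" by blast
    qed
    show "{X \<in> forms 2 1. W e 2 1 X = (\<lambda>_ _. 0)}
            \<subseteq> (\<lambda>v. bracket v e) ` {X \<in> forms 1 2. W e 1 2 X = (\<lambda>_ _. 0)}"
    proof
      fix X assume "X \<in> {X \<in> forms 2 1. W e 2 1 X = (\<lambda>_ _. 0)}"
      then have X: "X \<in> forms 2 1" "W e 2 1 X = (\<lambda>_ _. 0)" by auto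
      note sd = stepD[OF X D dg]
      let ?S = "\<lambda>i j. Zinv (pullback_metric e) (Zgam e f X) i j / (det4 (e 0) (e 1) (e 2) f * detg (pullback_metric e))"
      have "VS e ?S \<in> {X \<in> forms 1 2. W e 1 2 X = (\<lambda>_ _. 0)}"
        using VS_forms C1[OF sd(1)] by blast
      then show "X \<in> (\<lambda>v. bracket v e) ` {X \<in> forms 1 2. W e 1 2 X = (\<lambda>_ _. 0)}"
        using sd(2) by (metis (no_types, lifting) image_eqI)
    qed
  qed
  have part3: "W e 2 1 ` forms 2 1 = forms 3 2"
  proof
    show "W e 2 1 ` forms 2 1 \<subseteq> forms 3 2"
    proof
      fix Y assume "Y \<in> W e 2 1 ` forms 2 1"
      then obtain X where X: "X \<in> forms 2 1" "Y = W e 2 1 X" by blast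
      show "Y \<in> forms 3 2" unfolding X(2) W_def using wedge_forms[OF X(1), of e]
        by (simp add: numeral_2_eq_2 numeral_3_eq_3)
    qed
    show "forms 3 2 \<subseteq> W e 2 1 ` forms 2 1"
    proof
      fix Y assume Y: "Y \<in> forms 3 2"
      have "Y = W e 2 1 (Xe e f Y)" using stepE[OF Y D] by simp
      then show "Y \<in> W e 2 1 ` forms 2 1" using Xe_forms by blast
    qed
  qed
  show ?thesis using part1 part2 part3 by blast
qed

end
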